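(* Let $l=2^s$ with $s$ an integer and $l>2$, and let $q=l^2$. Then there exists a quantum MDS code with parameters $[[l^2+1,\,l^2-2l+3,\,l]]_q$; in particular, there exists a $q$-ary quantum MDS code of length $l^2+1$ and minimum distance $l$.
   Context: Quantum codes: let $V_n=(\mathbb{C}^q)^{\otimes n}$ with orthonormal basis $\{|\mathbf{c}\rangle:\mathbf{c}\in\mathbb{F}_q^n\}$, $q=p^e$. For $a,b\in\mathbb{F}_q$ define $X(a)|x\rangle=|x+a\rangle$, $Z(b)|x\rangle=\omega^{\mathrm{tr}(bx)}|x\rangle$ with $\omega=e^{2\pi i/p}$ and $\mathrm{tr}:\mathbb{F}_q\to\mathbb{F}_p$ the trace; for $\mathbf{a},\mathbf{b}\in\mathbb{F}_q^n$ let $X(\mathbf{a})=\bigotimes_i X(a_i)$, $Z(\mathbf{b})=\bigotimes_i Z(b_i)$. The error group is $G_n=\{\omega^cX(\mathbf{a})Z(\mathbf{b})\}$, and the weight of $\omega^cX(\mathbf{a})Z(\mathbf{b})$ is the number of $i$ with $(a_i,b_i)\ne(0,0)$. A quantum code with parameters $[[n,k,d]]_q$ is a subspace $Q\subseteq V_n$ of dimension $q^k$ with minimum distance $d$: for all $|u\rangle,|v\rangle\in Q$ with $\langle u|v\rangle=0$ and every $E\in G_n$ of weight at most $d-1$, $\langle u|E|v\rangle=0$ (with the standard purity-based convention when $k=0$). Every $[[n,k,d]]_q$ quantum code satisfies the quantum Singleton bound $2d\le n-k+2$; a code attaining $2d=n-k+2$ is called a quantum MDS code. *)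

theory Defs
  imports "HOL-Analysis.Analysis" "HOL-Library.Function_Algebras"
begin

text \<open>Words of length n over F_q are represented as functions nat => F_q that vanish
  at every index >= n (coordinates 0..n-1).  A state of V_n = (C^q)^(tensor n) is a
  function from words to complex numbers (its coordinates in the basis |c>),
  vanishing outside the words of length n.\<close>

definition words :: "nat \<Rightarrow> (nat \<Rightarrow> 'a::zero) set" where
  "words n = {c. \<forall>i\<ge>n. c i = 0}"

definition Vn :: "nat \<Rightarrow> ((nat \<Rightarrow> 'a::zero) \<Rightarrow> complex) set" where
  "Vn n = {v. \<forall>x. x \<notin> words n \<longrightarrow> v x = 0}"

definition cscale :: "complex \<Rightarrow> ('b \<Rightarrow> complex) \<Rightarrow> ('b \<Rightarrow> complex)" where
  "cscale c f = (\<lambda>x. c * f x)"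

definition qinner :: "nat \<Rightarrow> ((nat \<Rightarrow> 'a::{zero,finite}) \<Rightarrow> complex)
    \<Rightarrow> ((nat \<Rightarrow> 'a) \<Rightarrow> complex) \<Rightarrow> complex" where
  "qinner n u v = (\<Sum>x\<in>words n. cnj (u x) * v x)"

definition fdeg :: "'a::{finite,field} itself \<Rightarrow> nat" where
  "fdeg _ = (LEAST e. 0 < e \<and> CHAR('a) ^ e = CARD('a))"

definition ftrace :: "'a::{finite,field} \<Rightarrow> 'a" where
  "ftrace x = (\<Sum>i<fdeg TYPE('a). x ^ (CHAR('a) ^ i))"

text \<open>omega^t for t in the prime field F_p (identified with {0..p-1}), omega = exp(2 pi i/p).\<close>
definition omega_pow :: "'a::{finite,field} \<Rightarrow> complex" where
  "omega_pow t = exp (2 * pi * \<i> * of_nat (THE k. k < CHAR('a) \<and> of_nat k = t) / of_nat CHAR('a))"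

definition omega_nat :: "'a::{finite,field} itself \<Rightarrow> nat \<Rightarrow> complex" where
  "omega_nat _ c = exp (2 * pi * \<i> * of_nat c / of_nat CHAR('a))"

text \<open>Action of the error omega^c X(a) Z(b) on a state v:
  Z(b)|y> = prod_i omega^(tr(b_i y_i)) |y>,  X(a)|y> = |y + a>, so
  (X(a)Z(b)v)(x) = prod_i omega^(tr(b_i (x_i - a_i))) * v(x - a).\<close>
definition err_apply :: "nat \<Rightarrow> nat \<Rightarrow> (nat \<Rightarrow> 'a::{finite,field}) \<Rightarrow> (nat \<Rightarrow> 'a)
    \<Rightarrow> ((nat \<Rightarrow> 'a) \<Rightarrow> complex) \<Rightarrow> ((nat \<Rightarrow> 'a) \<Rightarrow> complex)" where
  "err_apply n c a b v = (\<lambda>x. if x \<in> words n then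
       omega_nat TYPE('a) c * (\<Prod>i<n. omega_pow (ftrace (b i * (x i - a i)))) * v (x - a)
     else 0)"

definition err_weight :: "nat \<Rightarrow> (nat \<Rightarrow> 'a::zero) \<Rightarrow> (nat \<Rightarrow> 'a) \<Rightarrow> nat" where
  "err_weight n a b = card {i. i < n \<and> (a i \<noteq> 0 \<or> b i \<noteq> 0)}"

definition has_min_distance :: "nat \<Rightarrow> ((nat \<Rightarrow> 'a::{finite,field}) \<Rightarrow> complex) set \<Rightarrow> nat \<Rightarrow> bool" where
  "has_min_distance n Q d \<longleftrightarrow>
     (\<forall>u\<in>Q. \<forall>v\<in>Q. qinner n u v = 0 \<longrightarrow>
        (\<forall>c a b. a \<in> words n \<and> b \<in> words n \<and> err_weight n a b \<le> d - 1 \<longrightarrow>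
            qinner n u (err_apply n c a b v) = 0))"

definition is_quantum_code :: "nat \<Rightarrow> nat \<Rightarrow> nat \<Rightarrow> ((nat \<Rightarrow> 'a::{finite,field}) \<Rightarrow> complex) set \<Rightarrow> bool" where
  "is_quantum_code n k d Q \<longleftrightarrow>
     Q \<subseteq> Vn n \<and> module.subspace cscale Q \<and>
     vector_space.dim cscale Q = CARD('a) ^ k \<and> has_min_distance n Q d"

text \<open>Quantum MDS code: attains the quantum Singleton bound 2d = n - k + 2.\<close>
definition is_quantum_MDS_code :: "nat \<Rightarrow> nat \<Rightarrow> nat \<Rightarrow> ((nat \<Rightarrow> 'a::{finite,field}) \<Rightarrow> complex) set \<Rightarrow> bool" where
  "is_quantum_MDS_code n k d Q \<longleftrightarrow> is_quantum_code n k d Q \<and> 2 * d + k = n + 2"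

end

theory Submission
  imports Defs "HOL-Computational_Algebra.Polynomial"
begin


lemma fermat_ff:
  fixes x :: "'a::{finite,field}"
  assumes "x \<noteq> 0"
  shows "x ^ (CARD('a) - 1) = 1"
proof -
  let ?N = "UNIV - {0::'a}"
  have bij: "bij_betw (\<lambda>a. x * a) ?N ?N"
  proof -
    have "y \<in> (\<lambda>a. x * a) ` ?N" if "y \<noteq> 0" for y
      using assms that by (intro image_eqI[where x="inverse x * y"]) auto
    then show ?thesis using assms by (auto simp: bij_betw_def inj_on_def)
  qed
  have "prod (\<lambda>a. x * a) ?N = prod id ?N"
    using prod.reindex_bij_betw[OF bij, of id] by simp
  moreover have "prod (\<lambda>a. x * a) ?N = x ^ card ?N * prod id ?N"
    by (simp add: prod.distrib)
  moreover have "prod id ?N \<noteq> 0" by simp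
  moreover have "card ?N = CARD('a) - 1" by (simp add: card_Diff_singleton)
  ultimately show ?thesis by auto
qed

lemma fermat_ff2:
  fixes x :: "'a::{finite,field}"
  shows "x ^ CARD('a) = x"
proof (cases "x = 0")
  case True then show ?thesis by simp
next
  case False
  have "CARD('a) = Suc (CARD('a) - 1)" using finite_UNIV_card_ge_0[where 'a='a] by simp
  then have "x ^ CARD('a) = x * x ^ (CARD('a) - 1)" by (metis power_Suc)
  then show ?thesis using fermat_ff[OF False] by simp
qed

lemma two_eq_zero_ff:
  assumes "even CARD('a::{finite,field})"
  shows "(2::'a) = 0"
proof -
  have "((-1)::'a) ^ (CARD('a) - 1) = 1" by (rule fermat_ff) simp
  moreover have "odd (CARD('a) - 1)" using assms finite_UNIV_card_ge_0[where 'a='a] by simp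
  ultimately have "(-1::'a) = 1" by simp
  then show ?thesis by (metis add.commute diff_add_cancel diff_minus_eq_add one_add_one right_minus_eq)
qed

lemma CHAR_two:
  assumes "(2::'a::field) = 0"
  shows "CHAR('a) = 2"
  by (rule CHAR_eq_posI) (use assms in \<open>auto simp: less_2_cases_iff\<close>)



lemma roots_bound_ex:
  fixes p :: "'a::{field} poly"
  assumes "p \<noteq> 0" "finite A" "degree p < card A"
  shows "\<exists>x\<in>A. poly p x \<noteq> 0"
proof (rule ccontr)
  assume "\<not> ?thesis"
  then have "A \<subseteq> {x. poly p x = 0}" by auto
  then have "card A \<le> card {x. poly p x = 0}"
    using poly_roots_finite[OF assms(1)] by (intro card_mono)
  also have "\<dots> \<le> degree p" by (rule card_poly_roots_bound[OF assms(1)])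
  finally show False using assms(3) by simp
qed

definition psum :: "nat \<Rightarrow> 'a::{finite,field}" where "psum N = (\<Sum>x\<in>UNIV. x ^ N)"

context
  fixes dummy :: "'a::{finite,field} itself"
  assumes two0: "(2::'a) = 0"
begin

lemma neg_self: "- (x::'a) = x"
  using two0 by (metis add_eq_0_iff2 mult_2 mult_zero_left)

lemma minus_eq_plus: "(x::'a) - y = x + y"
  by (metis diff_minus_eq_add neg_self)

lemma sq_add: "((x::'a) + y) ^ 2 = x ^ 2 + y ^ 2"
proof -
  have "(x + y) ^ 2 = x^2 + y^2 + 2 * x * y" by (simp add: power2_eq_square algebra_simps)
  then show ?thesis using two0 by simp
qed

lemma pow2_add: "((x::'a) + y) ^ (2 ^ i) = x ^ (2 ^ i) + y ^ (2 ^ i)"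
proof (induction i)
  case 0 then show ?case by simp
next
  case (Suc i)
  have "(x + y) ^ (2 ^ Suc i) = ((x + y) ^ (2 ^ i)) ^ 2" by (simp add: power_mult[symmetric] mult.commute)
  also have "\<dots> = (x ^ (2 ^ i)) ^ 2 + (y ^ (2 ^ i)) ^ 2" by (simp add: Suc sq_add)
  finally show ?case by (simp add: power_mult[symmetric] mult.commute)
qed

lemma char_of_nat_even: "even n \<Longrightarrow> (of_nat n :: 'a) = 0"
  using two0 by (auto elim!: evenE)

lemma psum_0: "even CARD('a) \<Longrightarrow> (psum 0 :: 'a) = 0"
  by (simp add: psum_def char_of_nat_even)

lemma psum_mid:
  assumes "0 < N" "N < CARD('a) - 1"
  shows "(psum N :: 'a) = 0"
proof -
  let ?p = "monom (1::'a) N - 1"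
  have "?p \<noteq> 0"
  proof
    assume "?p = 0"
    then have "coeff ?p N = 0" by simp
    then show False using assms by (simp add: coeff_monom)
  qed
  moreover have "degree ?p \<le> N" by (intro degree_diff_le) (auto simp: degree_monom_le)
  moreover have "card (UNIV - {0::'a}) = CARD('a) - 1" by (simp add: card_Diff_singleton)
  ultimately obtain b where b: "b \<in> UNIV - {0::'a}" "poly ?p b \<noteq> 0"
    using roots_bound_ex[of ?p "UNIV - {0::'a}"] assms by fastforce
  then have bN: "b ^ N \<noteq> 1" by (simp add: poly_monom)
  have bij: "bij_betw (\<lambda>a. b * a) UNIV UNIV"
  proof -
    have "y \<in> range (\<lambda>a. b * a)" for y
      using b by (intro image_eqI[where x="inverse b * y"]) auto
    then show ?thesis using b by (auto simp: bij_betw_def inj_on_def)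
  qed
  have "(psum N :: 'a) = (\<Sum>x\<in>UNIV. (b * x) ^ N)"
    unfolding psum_def using sum.reindex_bij_betw[OF bij, of "\<lambda>x. x ^ N"] by simp
  also have "\<dots> = b ^ N * psum N" by (simp add: psum_def power_mult_distrib sum_distrib_left)
  finally have "(1 - b ^ N) * (psum N :: 'a) = 0" by (simp add: algebra_simps)
  then show ?thesis using bN by simp
qed

lemma psum_top:
  assumes "even CARD('a)"
  shows "(psum (CARD('a) - 1) :: 'a) = 1"
proof -
  have pos: "CARD('a) > 0" by simp
  have c2: "CARD('a) \<ge> 2" using pos assms by presburger
  have "(psum (CARD('a) - 1) :: 'a) = (\<Sum>x\<in>insert 0 (UNIV - {0}). x ^ (CARD('a) - 1))"
    unfolding psum_def by (simp add: insert_UNIV)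
  also have "\<dots> = 0 ^ (CARD('a) - 1) + (\<Sum>x\<in>UNIV - {0}. x ^ (CARD('a) - 1))"
    by (subst sum.insert) auto
  also have "\<dots> = (\<Sum>x\<in>UNIV - {0::'a}. 1)"
  proof -
    have "(0::'a) ^ (CARD('a) - 1) = 0" using c2 by (simp add: power_0_left)
    moreover have "(\<Sum>x\<in>UNIV - {0::'a}. x ^ (CARD('a) - 1)) = (\<Sum>x\<in>UNIV - {0::'a}. 1)"
      by (intro sum.cong refl fermat_ff) simp
    ultimately show ?thesis by simp
  qed
  also have "\<dots> = of_nat (CARD('a) - 1)" by (simp add: card_Diff_singleton)
  also have "\<dots> = 1"
  proof -
    have "of_nat (CARD('a) - 1) + (1::'a) = of_nat CARD('a)" using c2 by (simp add: of_nat_diff)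
    then have "of_nat (CARD('a) - 1) + (1::'a) = 0" using char_of_nat_even[OF assms] by simp
    then show ?thesis by (metis add_eq_0_iff2 neg_self)
  qed
  finally show ?thesis .
qed

end


context
  fixes e :: nat
  assumes two0: "(2::'a::{finite,field}) = 0"
    and cardE: "CARD('a) = 2 ^ e" and epos: "e > 0"
begin

lemma CHAR2: "CHAR('a) = 2" using CHAR_two[OF two0] .

lemma fdeg_eq: "fdeg TYPE('a) = e"
  unfolding fdeg_def CHAR2 cardE
  by (rule Least_equality) (use epos in auto)

lemma ftrace_eq: "ftrace (x::'a) = (\<Sum>i<e. x ^ (2 ^ i))"
  unfolding ftrace_def fdeg_eq CHAR2 ..

lemma ftrace_add: "ftrace ((x::'a) + y) = ftrace x + ftrace y"
  unfolding ftrace_eq by (simp add: pow2_add[OF two0] sum.distrib)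

lemma ftrace_0: "ftrace (0::'a) = 0"
  unfolding ftrace_eq by (simp add: power_0_left)

lemma sq_sum: "(\<Sum>i\<in>A. f i :: 'a) ^ 2 = (\<Sum>i\<in>A. (f i) ^ 2)"
proof (induction A rule: infinite_finite_induct)
  case (insert x F) then show ?case by (simp add: sq_add[OF two0])
qed auto

lemma ftrace_sq: "(ftrace (x::'a)) ^ 2 = ftrace x"
proof -
  let ?f = "\<lambda>i. x ^ (2 ^ i)"
  have "(ftrace x) ^ 2 = (\<Sum>i<e. (?f i) ^ 2)" unfolding ftrace_eq by (rule sq_sum)
  also have "\<dots> = (\<Sum>i<e. ?f (Suc i))" by (simp add: power_mult[symmetric] mult.commute)
  also have "\<dots> = (\<Sum>i<Suc e. ?f i) - ?f 0" by (subst sum.lessThan_Suc_shift) simp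
  also have "\<dots> = (\<Sum>i<e. ?f i) + ?f e - ?f 0" by simp
  also have "?f e = x" using fermat_ff2[of x] cardE by simp
  finally show ?thesis unfolding ftrace_eq by simp
qed

lemma ftrace_01: "ftrace (x::'a) = 0 \<or> ftrace x = 1"
proof -
  have "ftrace x * (ftrace x - 1) = 0" using ftrace_sq[of x] by (simp add: power2_eq_square algebra_simps)
  then show ?thesis by auto
qed

lemma ftrace_nonzero: "\<exists>x::'a. ftrace x = 1"
proof -
  define P where "P = (\<Sum>i<e. monom (1::'a) (2 ^ i))"
  have polyP: "poly P x = ftrace x" for x unfolding P_def ftrace_eq by (simp add: poly_sum poly_monom)
  have "coeff P (2 ^ (e - 1)) = (\<Sum>i<e. if i = e - 1 then 1 else 0)"
    unfolding P_def coeff_sum coeff_monom by (intro sum.cong refl) simp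
  also have "\<dots> = 1" using epos by simp
  finally have "P \<noteq> 0" by auto
  moreover have "degree P \<le> 2 ^ (e - 1)" unfolding P_def
    by (intro degree_sum_le) (auto intro!: order.trans[OF degree_monom_le] power_increasing)
  moreover have "(2::nat) ^ (e - 1) < 2 ^ e" using epos by simp
  ultimately obtain x where "poly P x \<noteq> 0"
    using roots_bound_ex[of P "UNIV::'a set"] cardE by fastforce
  then show ?thesis using polyP ftrace_01 by metis
qed

lemma omega_pow_0: "omega_pow (0::'a) = 1"
proof -
  have "(THE k. k < CHAR('a) \<and> of_nat k = (0::'a)) = 0"
    unfolding CHAR2 by (rule the_equality) (auto simp: less_2_cases_iff)
  then show ?thesis unfolding omega_pow_def by simp
qed

lemma omega_pow_1: "omega_pow (1::'a) = -1"
proof -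
  have "(THE k. k < CHAR('a) \<and> of_nat k = (1::'a)) = 1"
    unfolding CHAR2 by (rule the_equality) (auto simp: less_2_cases_iff)
  then have "omega_pow (1::'a) = exp (of_real pi * \<i>)" unfolding omega_pow_def CHAR2 by simp
  then show ?thesis by simp
qed

definition chi :: "'a \<Rightarrow> complex" where "chi x = omega_pow (ftrace x)"

lemma chi_add: "chi (x + y) = chi x * chi y"
  unfolding chi_def ftrace_add
  using ftrace_01[of x] ftrace_01[of y] two0
  by (auto simp: omega_pow_0 omega_pow_1)

lemma chi_0: "chi 0 = 1" unfolding chi_def ftrace_0 omega_pow_0 ..

lemma chi_nontriv: "\<exists>x. chi x \<noteq> 1"
proof -
  obtain x :: 'a where "ftrace x = 1" using ftrace_nonzero by blast
  then have "chi x = -1" unfolding chi_def by (simp add: omega_pow_1)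
  then show ?thesis by (intro exI[of _ x]) simp
qed

lemma chi_sum: "(\<Prod>i\<in>A. chi (f i)) = chi (\<Sum>i\<in>A. f i)"
  by (induction A rule: infinite_finite_induct) (auto simp: chi_add chi_0)

end


lemma arith_l:
  fixes l :: nat assumes "l > 2"
  shows "l + 1 + (l - 1) * (l - 2) = l^2 - 2*l + 3" "l^2 - 2*l + 3 + (2*l - 4) = l^2 - 1"
proof -
  obtain m where m: "l = m + 3" using assms by (intro that[of "l - 3"]) simp
  have sq: "l^2 = (m*m + 4*m + 3) + 2*l" unfolding m by (simp add: power2_eq_square algebra_simps)
  have a: "l^2 - 2*l + 3 = m*m + 4*m + 6" unfolding sq by simp
  show "l + 1 + (l - 1) * (l - 2) = l^2 - 2*l + 3" unfolding a unfolding m by (simp add: algebra_simps)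
  show "l^2 - 2*l + 3 + (2*l - 4) = l^2 - 1" unfolding a unfolding sq unfolding m by simp
qed

context
  fixes l s :: nat
  assumes two0: "(2::'a::{finite,field}) = 0"
    and cardL: "CARD('a) = l ^ 2" and ls: "l = 2 ^ s" and lgt: "l > 2"
begin

lemma evenq: "even CARD('a)" using cardL ls lgt by (cases s) auto

lemma exists_c1: "\<exists>c::'a. c ^ l \<noteq> c"
proof -
  let ?p = "monom (1::'a) l - monom 1 1"
  have "coeff ?p l = 1" using lgt by (simp add: coeff_monom)
  then have "?p \<noteq> 0" by (metis coeff_0 zero_neq_one)
  moreover have "degree ?p \<le> l" using lgt by (intro degree_diff_le order.trans[OF degree_monom_le]) auto
  moreover have "l < CARD('a)" using cardL lgt by (simp add: power2_eq_square)
  ultimately obtain c where "poly ?p c \<noteq> 0" using roots_bound_ex[of ?p "UNIV::'a set"] by fastforce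
  then show ?thesis by (auto simp: poly_monom)
qed

lemma exists_c2: "\<exists>c::'a. \<forall>b. b ^ 2 + b \<noteq> c"
proof -
  have "\<not> inj (\<lambda>b::'a. b ^ 2 + b)"
  proof
    assume "inj (\<lambda>b::'a. b ^ 2 + b)"
    moreover have "(0::'a) ^ 2 + 0 = 1 ^ 2 + 1" using two0 by simp
    ultimately show False by (metis (mono_tags) injD zero_neq_one)
  qed
  then have "\<not> surj (\<lambda>b::'a. b ^ 2 + b)" using finite_UNIV_surj_inj[of "\<lambda>b::'a. b ^ 2 + b"] by auto
  then show ?thesis by (metis (mono_tags, lifting) surj_def)
qed

definition c1 :: 'a where "c1 = (SOME c. c ^ l \<noteq> c)"
definition c2 :: 'a where "c2 = (SOME c. \<forall>b. b ^ 2 + b \<noteq> c)"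
definition ua :: nat where "ua = (l - 1) * (l - 2) div 2"
definition upoly :: "'a poly" where
  "upoly = (monom 1 (l + 1) + [:c1:]) * [:c2, 1, 1:] ^ ua"

lemma c1_prop: "c1 ^ l \<noteq> c1" unfolding c1_def using exists_c1 by (rule someI_ex)
lemma c2_prop: "b ^ 2 + b \<noteq> c2"
proof -
  have "\<forall>b. b ^ 2 + b \<noteq> c2" unfolding c2_def using exists_c2 by (rule someI_ex)
  then show ?thesis by blast
qed

lemma upoly_nz: "poly upoly x \<noteq> 0"
proof -
  have f1: "x ^ (l + 1) + c1 \<noteq> 0"
  proof
    assume "x ^ (l + 1) + c1 = 0"
    then have "c1 = - (x ^ (l + 1))" by (simp add: eq_neg_iff_add_eq_0 add.commute)
    then have c: "c1 = x ^ (l + 1)" by (simp only: neg_self[OF two0])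
    have "c1 ^ l = x ^ ((l + 1) * l)" unfolding c by (simp only: power_mult)
    also have "(l + 1) * l = CARD('a) + l" using cardL by (simp add: power2_eq_square)
    also have "x ^ (CARD('a) + l) = x ^ CARD('a) * x ^ l" by (rule power_add)
    also have "\<dots> = c1" using fermat_ff2[of x] c by simp
    finally show False using c1_prop by simp
  qed
  have f2: "c2 + x * (1 + x) \<noteq> 0"
  proof
    assume "c2 + x * (1 + x) = 0"
    then have "c2 + x + x * x = 0" by (simp add: algebra_simps)
    then have "c2 = - (x * x + x)" by (simp add: eq_neg_iff_add_eq_0 algebra_simps)
    then have "c2 = x ^ 2 + x" by (simp only: neg_self[OF two0] power2_eq_square)
    then show False using c2_prop[of x] by simp
  qed
  have "poly upoly x = (x ^ (l + 1) + c1) * (c2 + x * (1 + x)) ^ ua"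
    unfolding upoly_def by (simp add: poly_monom)
  then show ?thesis using f1 f2 by simp
qed

lemma upoly_deg: "degree upoly = l ^ 2 - 2 * l + 3"
proof -
  have d1: "degree (monom (1::'a) (l + 1) + [:c1:]) = l + 1"
    by (subst degree_add_eq_left) (auto simp: degree_monom_eq)
  have n1: "monom (1::'a) (l + 1) + [:c1:] \<noteq> 0" using d1 by auto
  have d2: "degree ([:c2, 1, 1:] ^ ua) = 2 * ua" by (subst degree_power_eq) auto
  have n2: "[:c2, 1, 1::'a:] ^ ua \<noteq> 0" by simp
  have "degree upoly = degree (monom (1::'a) (l + 1) + [:c1:]) + degree ([:c2, 1, 1:] ^ ua)"
    unfolding upoly_def by (rule degree_mult_eq[OF n1 n2])
  then have "degree upoly = l + 1 + 2 * ua" by (simp only: d1 d2)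
  moreover have "2 * ua = (l - 1) * (l - 2)"
  proof -
    have "even l" using ls lgt by (cases s) auto
    then have "even (l - 2)" using lgt by simp
    then have "even ((l - 1) * (l - 2))" by simp
    then show ?thesis unfolding ua_def by simp
  qed
  moreover have "l + 1 + (l - 1) * (l - 2) = l ^ 2 - 2 * l + 3"
    by (rule arith_l(1)[OF lgt])
  ultimately show ?thesis by simp
qed

lemma upoly_lead: "lead_coeff upoly = 1"
proof -
  have d1: "degree (monom (1::'a) (l + 1) + [:c1:]) = l + 1"
    by (subst degree_add_eq_left) (auto simp: degree_monom_eq)
  have "lead_coeff (monom (1::'a) (l + 1) + [:c1:]) = 1" using d1 by simp
  then show ?thesis unfolding upoly_def by (simp add: lead_coeff_mult lead_coeff_power)
qed

lemma deg_sum: "degree upoly + (2 * l - 4) = CARD('a) - 1"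
proof -
  have "l ^ 2 - 2 * l + 3 + (2 * l - 4) = l ^ 2 - 1" by (rule arith_l(2)[OF lgt])
  then show ?thesis unfolding upoly_deg cardL .
qed


lemma upoly_moment:
  assumes "m \<le> 2 * l - 4"
  shows "(\<Sum>x\<in>UNIV. poly upoly x * x ^ m) = (if m = 2 * l - 4 then 1 else 0)"
proof -
  let ?t = "degree upoly"
  have "(\<Sum>x\<in>UNIV. poly upoly x * x ^ m) = (\<Sum>x\<in>UNIV. \<Sum>r\<le>?t. coeff upoly r * x ^ (r + m))"
    by (simp add: poly_altdef sum_distrib_right power_add mult.assoc)
  also have "\<dots> = (\<Sum>r\<le>?t. coeff upoly r * psum (r + m))"
    by (subst sum.swap) (simp add: psum_def sum_distrib_left)
  also have "\<dots> = (\<Sum>r\<le>?t. if r = ?t \<and> m = 2 * l - 4 then 1 else 0)"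
  proof (intro sum.cong refl)
    fix r assume r: "r \<in> {..?t}"
    show "coeff upoly r * psum (r + m) = (if r = ?t \<and> m = 2 * l - 4 then 1 else 0)"
    proof (cases "r = ?t \<and> m = 2 * l - 4")
      case True
      then have "r + m = CARD('a) - 1" using deg_sum by simp
      then show ?thesis using True psum_top[OF two0 evenq] upoly_lead by simp
    next
      case False
      have rt: "r \<le> ?t" using r by simp
      have "r + m < ?t + (2 * l - 4)" using False rt assms by (cases "r = ?t") auto
      then have "r + m < CARD('a) - 1" using deg_sum by simp
      then have "(psum (r + m) :: 'a) = 0"
        using psum_mid[OF two0, of "r + m"] psum_0[OF two0 evenq] by (cases "r + m = 0") auto
      then show ?thesis using False by simp
    qed
  qed
  also have "\<dots> = (if m = 2 * l - 4 then 1 else 0)" by simp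
  finally show ?thesis .
qed

end


definition dotp :: "nat \<Rightarrow> (nat \<Rightarrow> 'a::comm_ring_1) \<Rightarrow> (nat \<Rightarrow> 'a) \<Rightarrow> 'a" where
  "dotp n x y = (\<Sum>i<n. x i * y i)"

lemma finite_sum_poly_eq:
  fixes f :: "'a::comm_ring_1 poly"
  assumes "degree f < k"
  shows "(\<Sum>j<k. coeff f j * x ^ j) = poly f x"
proof -
  have "(\<Sum>j<k. coeff f j * x ^ j) = (\<Sum>j\<le>degree f. coeff f j * x ^ j)"
    using assms by (intro sum.mono_neutral_right) (auto simp: coeff_eq_0)
  then show ?thesis by (simp add: poly_altdef)
qed

definition en :: "nat \<Rightarrow> 'a::{finite,field}" where "en = (SOME h. bij_betw h {..<CARD('a)} (UNIV::'a set))"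

definition sv :: "'a::{finite,field} \<Rightarrow> 'a" where "sv = inv (\<lambda>x::'a. x ^ 2)"

definition wt :: "nat \<Rightarrow> nat \<Rightarrow> 'a::{finite,field}" where "wt l i = sv (poly (upoly l) (en i))"

definition cw :: "nat \<Rightarrow> (nat \<Rightarrow> 'a::{finite,field}) \<Rightarrow> nat \<Rightarrow> 'a" where
  "cw l a i = (if i < CARD('a) then wt l i * (\<Sum>j<(l - 1). a j * en i ^ j) else if i = CARD('a) then a (l - 2) else 0)"

context
  fixes l s :: nat
  assumes two0: "(2::'a::{finite,field}) = 0"
    and cardL: "CARD('a) = l ^ 2" and ls: "l = 2 ^ s" and lgt: "l > 2"
begin


lemma en_bij: "bij_betw en {..<CARD('a)} (UNIV::'a set)"
proof -
  have "\<exists>h. bij_betw h {..<CARD('a)} (UNIV::'a set)"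
    using ex_bij_betw_nat_finite[of "UNIV::'a set"] by (simp add: lessThan_atLeast0)
  then show ?thesis unfolding en_def by (rule someI_ex)
qed

lemma sq_inj: "inj (\<lambda>x::'a. x ^ 2)"
proof
  fix x y :: 'a assume "x ^ 2 = y ^ 2"
  note h = this
  have "(x + y) ^ 2 = x ^ 2 + y ^ 2" by (rule sq_add[OF two0])
  also have "\<dots> = x ^ 2 + x ^ 2" by (simp only: h)
  also have "\<dots> = 2 * x ^ 2" by (rule mult_2[symmetric])
  also have "\<dots> = 0" by (simp only: two0 mult_zero_left)
  finally have "(x + y) ^ 2 = 0" .
  then have "x + y = 0" by simp
  then have "x = - y" by (simp add: eq_neg_iff_add_eq_0)
  then show "x = y" by (simp only: neg_self[OF two0])
qed

lemma sv_sq: "(sv y) ^ 2 = (y::'a)"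
proof -
  have "surj (\<lambda>x::'a. x ^ 2)" using finite_UNIV_inj_surj[OF _ sq_inj] by simp
  from surj_f_inv_f[OF this, of y] show ?thesis unfolding sv_def .
qed

lemma wt_sq: "(wt l i :: 'a) * wt l i = poly (upoly l) (en i)"
  using sv_sq[of "poly (upoly l) (en i)"] unfolding wt_def by (simp only: power2_eq_square)

lemma wt_nz: "(wt l i :: 'a) \<noteq> 0"
proof
  assume "(wt l i :: 'a) = 0"
  then have "poly (upoly l) (en i :: 'a) = 0" using wt_sq[of i] by simp
  with upoly_nz[OF two0 cardL ls lgt, of "en i"] show False by blast
qed

end


context
  fixes l s :: nat
  assumes two0: "(2::'a::{finite,field}) = 0"
    and cardL: "CARD('a) = l ^ 2" and ls: "l = 2 ^ s" and lgt: "l > 2"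
begin

lemma expand3:
  fixes a b :: "nat \<Rightarrow> 'a" and p :: "'a \<Rightarrow> 'a"
  shows "(\<Sum>x\<in>UNIV. p x * (\<Sum>j<K. a j * x ^ j) * (\<Sum>j<K. b j * x ^ j))
        = (\<Sum>j<K. \<Sum>j'<K. a j * b j' * (\<Sum>x\<in>UNIV. p x * x ^ (j + j')))"
proof -
  have "(\<Sum>x\<in>UNIV. p x * (\<Sum>j<K. a j * x ^ j) * (\<Sum>j<K. b j * x ^ j))
      = (\<Sum>x\<in>UNIV. \<Sum>j<K. \<Sum>j'<K. a j * b j' * (p x * x ^ (j + j')))"
    by (intro sum.cong refl) (simp add: sum_distrib_left sum_distrib_right power_add mult_ac)
  also have "\<dots> = (\<Sum>j<K. \<Sum>x\<in>UNIV. \<Sum>j'<K. a j * b j' * (p x * x ^ (j + j')))"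
    by (rule sum.swap)
  also have "\<dots> = (\<Sum>j<K. \<Sum>j'<K. \<Sum>x\<in>UNIV. a j * b j' * (p x * x ^ (j + j')))"
    by (intro sum.cong refl sum.swap)
  also have "\<dots> = (\<Sum>j<K. \<Sum>j'<K. a j * b j' * (\<Sum>x\<in>UNIV. p x * x ^ (j + j')))"
    by (simp add: sum_distrib_left)
  finally show ?thesis .
qed

lemma cw_dot:
  fixes a b :: "nat \<Rightarrow> 'a"
  shows "dotp (CARD('a) + 1) (cw l a) (cw l b) = 0"
proof -
  let ?A = "\<lambda>x::'a. \<Sum>j<l - 1. a j * x ^ j"
  let ?B = "\<lambda>x::'a. \<Sum>j<l - 1. b j * x ^ j"
  let ?u = "poly (upoly l)"
  have "dotp (CARD('a) + 1) (cw l a) (cw l b)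
      = (\<Sum>i<CARD('a). cw l a i * cw l b i) + cw l a (CARD('a)) * cw l b (CARD('a))"
    unfolding dotp_def by simp
  also have "(\<Sum>i<CARD('a). cw l a i * cw l b i) = (\<Sum>i<CARD('a). ?u (en i) * ?A (en i) * ?B (en i))"
  proof (intro sum.cong refl)
    fix i assume "i \<in> {..<CARD('a)}"
    then show "cw l a i * cw l b i = ?u (en i) * ?A (en i) * ?B (en i)"
    proof -
      have "cw l a i * cw l b i = (wt l i * wt l i) * ?A (en i) * ?B (en i)"
        using \<open>i \<in> _\<close> unfolding cw_def by (simp add: mult_ac)
      then show ?thesis using wt_sq[OF two0 cardL ls lgt, of i] by simp
    qed
  qed
  also have "\<dots> = (\<Sum>x\<in>UNIV. ?u x * ?A x * ?B x)"
    using sum.reindex_bij_betw[OF en_bij[OF two0 cardL ls lgt], of "\<lambda>x. ?u x * ?A x * ?B x"] by simp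
  also have "\<dots> = (\<Sum>j<l - 1. \<Sum>j'<l - 1. a j * b j' * (\<Sum>x\<in>UNIV. ?u x * x ^ (j + j')))"
    by (rule expand3)
  also have "\<dots> = (\<Sum>j<l - 1. \<Sum>j'<l - 1. if j = l - 2 \<and> j' = l - 2 then a j * b j' else 0)"
  proof (intro sum.cong refl)
    fix j j' assume "j \<in> {..<l - 1}" "j' \<in> {..<l - 1}"
    then have le: "j + j' \<le> 2 * l - 4" and iff: "(j + j' = 2 * l - 4) = (j = l - 2 \<and> j' = l - 2)"
      by auto
    show "a j * b j' * (\<Sum>x\<in>UNIV. ?u x * x ^ (j + j')) = (if j = l - 2 \<and> j' = l - 2 then a j * b j' else 0)"
      using upoly_moment[OF two0 cardL ls lgt le] iff by simp
  qed
  also have "\<dots> = a (l - 2) * b (l - 2)"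
  proof -
    have mem: "l - 2 \<in> {..<l - 1}" using lgt by simp
    have inner: "(\<Sum>j'<l - 1. if j = l - 2 \<and> j' = l - 2 then a j * b j' else 0)
        = (if j = l - 2 then a j * b (l - 2) else 0)" for j
      using mem by (cases "j = l - 2") (simp_all add: sum.delta')
    show ?thesis unfolding inner using mem by (simp add: sum.delta')
  qed
  also have "cw l a (CARD('a)) * cw l b (CARD('a)) = a (l - 2) * b (l - 2)"
    unfolding cw_def by simp
  finally show ?thesis using mult_2[of "a (l - 2) * b (l - 2)"] two0 by simp
qed

end


definition Dset :: "nat \<Rightarrow> (nat \<Rightarrow> 'a::{finite,field}) set" where
  "Dset l = {x \<in> words (CARD('a) + 1). \<forall>a\<in>words (l - 1). dotp (CARD('a) + 1) x (cw l a) = 0}"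

lemma coeff_words: "degree (f::'a::zero poly) < k \<Longrightarrow> coeff f \<in> words k"
  unfolding words_def by (auto intro: coeff_eq_0)

context
  fixes l s :: nat
  assumes two0: "(2::'a::{finite,field}) = 0"
    and cardL: "CARD('a) = l ^ 2" and ls: "l = 2 ^ s" and lgt: "l > 2"
begin

lemma cw_poly:
  fixes f :: "'a poly"
  assumes "degree f < l - 1"
  shows "i < CARD('a) \<Longrightarrow> cw l (coeff f) i = wt l i * poly f (en i)"
    and "cw l (coeff f) (CARD('a)) = coeff f (l - 2)"
  using finite_sum_poly_eq[OF assms] unfolding cw_def by auto

lemma en_inj: "i < CARD('a) \<Longrightarrow> j < CARD('a) \<Longrightarrow> (en i :: 'a) = en j \<Longrightarrow> i = j"
  using en_bij[OF two0 cardL ls lgt] unfolding bij_betw_def inj_on_def by auto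

lemma min_dist:
  assumes xD: "x \<in> Dset l" and wx: "card {i. i < CARD('a) + 1 \<and> x i \<noteq> (0::'a)} \<le> l - 1"
  shows "x = 0"
proof (rule ccontr)
  let ?n = "CARD('a) + 1"
  define S where "S = {i. i < ?n \<and> x i \<noteq> 0}"
  assume "x \<noteq> 0"
  have xw: "x \<in> words ?n" using xD unfolding Dset_def by simp
  obtain i0 where i0: "x i0 \<noteq> 0" using \<open>x \<noteq> 0\<close> by (auto simp: fun_eq_iff)
  then have i0n: "i0 < ?n" using xw unfolding words_def by (metis (mono_tags, lifting) mem_Collect_eq not_le)
  have i0S: "i0 \<in> S" using i0 i0n unfolding S_def by simp
  have finS: "finite S" unfolding S_def by simp
  have cardS: "card S \<le> l - 1" using wx unfolding S_def .
  define F where "F = S - {i0, CARD('a)}"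
  have Fq: "i \<in> F \<Longrightarrow> i < CARD('a)" for i unfolding F_def S_def by auto
  have finF: "finite F" unfolding F_def using finS by simp
  have cardF: "card F \<le> card S - 1"
  proof -
    have "F \<subseteq> S - {i0}" unfolding F_def by auto
    then have "card F \<le> card (S - {i0})" using finS by (intro card_mono) auto
    then show ?thesis using i0S finS by (simp add: card_Diff_singleton)
  qed
  have dz: "(\<Sum>i\<in>S. x i * cw l (coeff f) i) = 0" if df: "degree f < l - 1" for f :: "'a poly"
  proof -
    have "coeff f \<in> words (l - 1)" by (rule coeff_words[OF df])
    then have "dotp ?n x (cw l (coeff f)) = 0" using xD unfolding Dset_def by simp
    moreover have "dotp ?n x (cw l (coeff f)) = (\<Sum>i\<in>S. x i * cw l (coeff f) i)"
      unfolding dotp_def S_def by (intro sum.mono_neutral_right) auto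
    ultimately show ?thesis by simp
  qed
  define P where "P = (\<Prod>i\<in>F. [:- en i, 1::'a:])"
  have P0: "j \<in> F \<Longrightarrow> poly P (en j) = 0" for j
    unfolding P_def poly_prod using finF by (auto intro!: prod_zero)
  have Pnz: "poly P (en i0) \<noteq> 0" if "i0 < CARD('a)"
  proof -
    have "en i0 \<noteq> (en j :: 'a)" if "j \<in> F" for j
      using en_inj[of i0 j] Fq[OF that] \<open>i0 < CARD('a)\<close> that unfolding F_def by auto
    then show ?thesis unfolding P_def poly_prod using finF by (auto simp: prod_zero_iff)
  qed
  have degP: "degree P = card F"
    unfolding P_def by (subst degree_prod_eq_sum_degree) auto
  have monP: "lead_coeff P = 1" unfolding P_def by (simp add: lead_coeff_prod)
  show False
  proof (cases "i0 = CARD('a)")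
    case True
    define f where "f = P * [:0, 1::'a:] ^ (l - 2 - card F)"
    have cF: "card F \<le> l - 2" using cardF cardS by simp
    have degf: "degree f = l - 2"
    proof -
      have "degree f = degree P + degree ([:0, 1::'a:] ^ (l - 2 - card F))"
        unfolding f_def by (rule degree_mult_eq) (use monP in auto)
      then show ?thesis using degP cF by (simp add: degree_linear_power)
    qed
    have "lead_coeff f = 1" unfolding f_def by (simp add: lead_coeff_mult lead_coeff_power monP)
    then have lf: "coeff f (l - 2) = 1" using degf by simp
    have df: "degree f < l - 1" using degf lgt by simp
    have "(\<Sum>i\<in>S. x i * cw l (coeff f) i) = x i0 * cw l (coeff f) i0"
    proof (rule sum.remove[OF finS i0S, THEN trans])
      have "x i * cw l (coeff f) i = 0" if "i \<in> S - {i0}" for i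
      proof -
        have "i \<in> F" using that True unfolding F_def by auto
        then show ?thesis using cw_poly(1)[OF df Fq] P0 unfolding f_def by simp
      qed
      then have "(\<Sum>i\<in>S - {i0}. x i * cw l (coeff f) i) = 0" by (intro sum.neutral) blast
      then show "x i0 * cw l (coeff f) i0 + (\<Sum>i\<in>S - {i0}. x i * cw l (coeff f) i) = x i0 * cw l (coeff f) i0"
        by simp
    qed
    also have "\<dots> = x i0" using True cw_poly(2)[OF df] lf by simp
    finally show False using dz[OF df] i0 by simp
  next
    case False
    then have i0q: "i0 < CARD('a)" using i0n by simp
    have df: "degree P < l - 1" using degP cardF cardS lgt by arith
    have "(\<Sum>i\<in>S. x i * cw l (coeff P) i) = x i0 * cw l (coeff P) i0"
    proof (rule sum.remove[OF finS i0S, THEN trans])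
      have "x i * cw l (coeff P) i = 0" if "i \<in> S - {i0}" for i
      proof (cases "i = CARD('a)")
        case True
        then have "{i0, CARD('a)} \<subseteq> S" using that i0S by auto
        moreover have "i0 \<noteq> CARD('a)" using False by simp
        ultimately have c2: "card S \<ge> 2" using finS
          by (metis card_2_iff card_mono)
        have "card F = card S - 2" unfolding F_def using finS \<open>{i0, CARD('a)} \<subseteq> S\<close> \<open>i0 \<noteq> CARD('a)\<close>
          by (simp add: card_Diff_subset)
        then have "degree P < l - 2" using degP cardS c2 lgt by arith
        then show ?thesis using True cw_poly(2)[OF df] by (simp add: coeff_eq_0)
      next
        case False
        then have "i \<in> F" using that unfolding F_def by auto
        then show ?thesis using cw_poly(1)[OF df Fq] P0 by simp
      qed
      then have "(\<Sum>i\<in>S - {i0}. x i * cw l (coeff P) i) = 0" by (intro sum.neutral) blast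
      then show "x i0 * cw l (coeff P) i0 + (\<Sum>i\<in>S - {i0}. x i * cw l (coeff P) i) = x i0 * cw l (coeff P) i0"
        by simp
    qed
    also have "\<dots> = x i0 * (wt l i0 * poly P (en i0))" using cw_poly(1)[OF df i0q] by simp
    also have "\<dots> \<noteq> 0" using i0 wt_nz[OF two0 cardL ls lgt] Pnz[OF i0q] by simp
    finally show False using dz[OF df] by simp
  qed
qed

end


lemma words_Suc_bij:
  "bij_betw (\<lambda>x. (x(n := 0), x n)) (words (Suc n) :: (nat \<Rightarrow> 'a::zero) set) (words n \<times> UNIV)"
proof (rule bij_betw_imageI)
  show "inj_on (\<lambda>x. (x(n := 0), x n)) (words (Suc n) :: (nat \<Rightarrow> 'a) set)"
    by (auto simp: inj_on_def fun_eq_iff)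
  show "(\<lambda>x. (x(n := 0), x n)) ` words (Suc n) = (words n \<times> UNIV :: ((nat \<Rightarrow> 'a) \<times> 'a) set)"
  proof (intro equalityI subsetI)
    fix p assume "p \<in> (\<lambda>x. (x(n := 0), x n)) ` (words (Suc n) :: (nat \<Rightarrow> 'a) set)"
    then show "p \<in> words n \<times> UNIV" unfolding words_def by auto
  next
    fix p :: "(nat \<Rightarrow> 'a) \<times> 'a" assume "p \<in> words n \<times> UNIV"
    then obtain y c where p: "p = (y, c)" "y \<in> words n" by auto
    have "y(n := c) \<in> words (Suc n)" using p(2) unfolding words_def by auto
    moreover have "y(n := c, n := 0) = y" using p(2) unfolding words_def by (auto simp: fun_eq_iff)
    ultimately show "p \<in> (\<lambda>x. (x(n := 0), x n)) ` words (Suc n)" using p(1)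
      by (intro image_eqI[where x="y(n := c)"]) auto
  qed
qed

lemma words_fin_card:
  "finite (words n :: (nat \<Rightarrow> 'a::{zero,finite}) set) \<and> card (words n :: (nat \<Rightarrow> 'a) set) = CARD('a) ^ n"
proof (induction n)
  case 0
  have "words 0 = {0 :: nat \<Rightarrow> 'a}" unfolding words_def by (auto simp: fun_eq_iff)
  then show ?case by simp
next
  case (Suc n)
  have b: "bij_betw (\<lambda>x. (x(n := 0), x n)) (words (Suc n) :: (nat \<Rightarrow> 'a) set) (words n \<times> UNIV)"
    by (rule words_Suc_bij)
  have "finite ((words n :: (nat \<Rightarrow> 'a) set) \<times> (UNIV :: 'a set))" using Suc by (intro finite_cartesian_product) auto
  then have f: "finite (words (Suc n) :: (nat \<Rightarrow> 'a) set)" using bij_betw_finite[OF b] by simp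
  have "card (words (Suc n) :: (nat \<Rightarrow> 'a) set) = card ((words n :: (nat \<Rightarrow> 'a) set) \<times> (UNIV :: 'a set))"
    by (rule bij_betw_same_card[OF b])
  also have "\<dots> = CARD('a) ^ n * CARD('a)" using Suc by (simp add: card_cartesian_product)
  finally show ?case using f by simp
qed

lemma words_finite: "finite (words n :: (nat \<Rightarrow> 'a::{zero,finite}) set)"
  using words_fin_card by blast
lemma words_card: "card (words n :: (nat \<Rightarrow> 'a::{zero,finite}) set) = CARD('a) ^ n"
  using words_fin_card by blast

lemma words_mono: "m \<le> n \<Longrightarrow> words m \<subseteq> words n"
  unfolding words_def by auto
lemma words_add: "x \<in> words n \<Longrightarrow> y \<in> words n \<Longrightarrow> (x + y :: nat \<Rightarrow> 'a::monoid_add) \<in> words n"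
  unfolding words_def by auto
lemma words_diff: "x \<in> words n \<Longrightarrow> y \<in> words n \<Longrightarrow> (x - y :: nat \<Rightarrow> 'a::group_add) \<in> words n"
  unfolding words_def by auto
lemma words_zero: "(0 :: nat \<Rightarrow> 'a::zero) \<in> words n"
  unfolding words_def by auto

definition delt :: "nat \<Rightarrow> nat \<Rightarrow> 'a::{zero,one}" where "delt j = (\<lambda>i. if i = j then 1 else 0)"

definition phi :: "nat \<Rightarrow> (nat \<Rightarrow> 'a::{finite,field}) \<Rightarrow> nat \<Rightarrow> 'a" where
  "phi l x = (\<lambda>j. if j < l - 1 then dotp (CARD('a) + 1) x (cw l (delt j)) else 0)"

lemma delt_words: "j < k \<Longrightarrow> delt j \<in> words k"
  unfolding delt_def words_def by auto

lemma cw_decomp: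
  fixes a :: "nat \<Rightarrow> 'a::{finite,field}"
  assumes "a \<in> words (l - 1)" "l > 2"
  shows "cw l a i = (\<Sum>j<l - 1. a j * cw l (delt j) i)"
proof -
  have d: "(\<Sum>j'<l - 1. delt j j' * y ^ j') = y ^ j" if "j < l - 1" for j and y :: 'a
  proof -
    have "(\<Sum>j'<l - 1. delt j j' * y ^ j') = (\<Sum>j'<l - 1. if j' = j then y ^ j' else 0)"
      by (intro sum.cong refl) (simp add: delt_def)
    then show ?thesis using that by (simp add: sum.delta')
  qed
  consider "i < CARD('a)" | "i = CARD('a)" | "i > CARD('a)" by linarith
  then show ?thesis
  proof cases
    case 1
    have "(\<Sum>j<l - 1. a j * cw l (delt j) i) = (\<Sum>j<l - 1. a j * (wt l i * en i ^ j))"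
      by (intro sum.cong refl) (simp add: cw_def 1 d[simplified])
    then show ?thesis by (simp add: cw_def 1 sum_distrib_left mult_ac)
  next
    case 2
    have "l - 2 < l - 1" using assms by simp
    have "(\<Sum>j<l - 1. a j * cw l (delt j) i) = (\<Sum>j<l - 1. if j = l - 2 then a j else 0)"
      by (intro sum.cong refl) (auto simp: cw_def 2 delt_def)
    then show ?thesis using \<open>l - 2 < l - 1\<close> by (simp add: cw_def 2 sum.delta')
  next
    case 3
    then show ?thesis unfolding cw_def by simp
  qed
qed

lemma sum_cmul_aux: "(\<Sum>i\<in>A. f i * (c * g i)) = (c::'a::comm_ring_1) * (\<Sum>i\<in>A. f i * g i)"
  by (simp add: sum_distrib_left mult.left_commute)

lemma dotp_cw:
  fixes a :: "nat \<Rightarrow> 'a::{finite,field}"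
  assumes "a \<in> words (l - 1)" "l > 2"
  shows "dotp (CARD('a) + 1) x (cw l a) = (\<Sum>j<l - 1. a j * phi l x j)"
proof -
  have "dotp (CARD('a) + 1) x (cw l a) = (\<Sum>i<CARD('a) + 1. \<Sum>j<l - 1. x i * (a j * cw l (delt j) i))"
    unfolding dotp_def cw_decomp[OF assms] by (simp add: sum_distrib_left)
  also have "\<dots> = (\<Sum>j<l - 1. \<Sum>i<CARD('a) + 1. x i * (a j * cw l (delt j) i))" by (rule sum.swap)
  also have "\<dots> = (\<Sum>j<l - 1. a j * phi l x j)"
    unfolding phi_def dotp_def by (intro sum.cong refl) (simp only: sum_cmul_aux, simp)
  finally show ?thesis .
qed

lemma Dset_iff:
  assumes "l > 2"
  shows "(x :: nat \<Rightarrow> 'a::{finite,field}) \<in> Dset l \<longleftrightarrow> x \<in> words (CARD('a) + 1) \<and> phi l x = 0"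
proof
  assume x: "x \<in> Dset l"
  have "phi l x j = 0" for j
  proof (cases "j < l - 1")
    case True
    then have "delt j \<in> words (l - 1)" by (rule delt_words)
    then show ?thesis using x True unfolding Dset_def phi_def by auto
  qed (simp add: phi_def)
  then show "x \<in> words (CARD('a) + 1) \<and> phi l x = 0" using x unfolding Dset_def by (auto simp: fun_eq_iff)
next
  assume "x \<in> words (CARD('a) + 1) \<and> phi l x = 0"
  then have xw: "x \<in> words (CARD('a) + 1)" and p0: "phi l x = 0" by auto
  have "dotp (CARD('a) + 1) x (cw l a) = 0" if "a \<in> words (l - 1)" for a
    unfolding dotp_cw[OF that assms] p0 by simp
  then show "x \<in> Dset l" unfolding Dset_def using xw by blast
qed

lemma phi_add: "phi l (x + y) = phi l x + phi l y"
  unfolding phi_def dotp_def by (auto simp: fun_eq_iff distrib_right sum.distrib)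
lemma phi_diff: "phi l (x - y) = phi l x - phi l y"
  unfolding phi_def dotp_def by (auto simp: fun_eq_iff left_diff_distrib sum_subtractf)
lemma phi_words: "phi l x \<in> words (l - 1)"
  unfolding phi_def words_def by auto



definition Cset :: "nat \<Rightarrow> (nat \<Rightarrow> 'a::{finite,field}) set" where
  "Cset l = cw l ` words (l - 1)"

lemma cw_diff: "cw l (a - b) = cw l a - (cw l b :: nat \<Rightarrow> 'a::{finite,field})"
  unfolding cw_def by (auto simp: fun_eq_iff left_diff_distrib right_diff_distrib sum_subtractf)

lemma cw_words: "(cw l a :: nat \<Rightarrow> 'a::{finite,field}) \<in> words (CARD('a) + 1)"
  unfolding cw_def words_def by auto

context
  fixes l s :: nat
  assumes two0: "(2::'a::{finite,field}) = 0"
    and cardL: "CARD('a) = l ^ 2" and ls: "l = 2 ^ s" and lgt: "l > 2"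
begin

lemma l_le_q: "l - 1 < CARD('a)"
  using cardL lgt by (simp add: power2_eq_square) (metis less_imp_diff_less mult_less_cancel2 nat_mult_1 zero_less_numeral less_trans one_less_numeral_iff semiring_norm(76) lgt)

lemma phi_inj: "inj_on (phi l) (words (l - 1) :: (nat \<Rightarrow> 'a) set)"
proof
  fix z z' :: "nat \<Rightarrow> 'a"
  assume z: "z \<in> words (l - 1)" and z': "z' \<in> words (l - 1)" and eq: "phi l z = phi l z'"
  let ?w = "z - z'"
  have sub: "words (l - 1) \<subseteq> (words (CARD('a) + 1) :: (nat \<Rightarrow> 'a) set)"
    using l_le_q by (intro words_mono) simp
  have ww: "?w \<in> words (l - 1)" using z z' by (rule words_diff)
  then have "?w \<in> words (CARD('a) + 1)" using sub by blast
  moreover have "phi l ?w = 0" using eq by (simp add: phi_diff)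
  ultimately have wD: "?w \<in> Dset l" using Dset_iff[OF lgt] by blast
  have "{i. i < CARD('a) + 1 \<and> ?w i \<noteq> 0} \<subseteq> {..<l - 1}"
    using ww unfolding words_def by (auto simp: not_less[symmetric])
  then have "card {i. i < CARD('a) + 1 \<and> ?w i \<noteq> 0} \<le> l - 1"
    by (metis card_lessThan card_mono finite_lessThan)
  then have "?w = 0" by (rule min_dist[OF two0 cardL ls lgt wD])
  then show "z = z'" by simp
qed

lemma phi_image: "phi l ` (words (l - 1) :: (nat \<Rightarrow> 'a) set) = words (l - 1)"
proof (rule card_subset_eq)
  show "finite (words (l - 1) :: (nat \<Rightarrow> 'a) set)" by (rule words_finite)
  show "phi l ` (words (l - 1) :: (nat \<Rightarrow> 'a) set) \<subseteq> words (l - 1)" using phi_words by blast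
  show "card (phi l ` (words (l - 1) :: (nat \<Rightarrow> 'a) set)) = card (words (l - 1) :: (nat \<Rightarrow> 'a) set)"
    by (rule card_image[OF phi_inj])
qed

definition sig :: "(nat \<Rightarrow> 'a) \<Rightarrow> nat \<Rightarrow> 'a" where
  "sig = inv_into (words (l - 1)) (phi l)"

lemma sig_props: "y \<in> words (l - 1) \<Longrightarrow> sig y \<in> words (l - 1) \<and> phi l (sig y) = y"
  unfolding sig_def using phi_image by (metis inv_into_into f_inv_into_f)

lemma card_D: "card (Dset l :: (nat \<Rightarrow> 'a) set) * CARD('a) ^ (l - 1) = CARD('a) ^ (CARD('a) + 1)"
proof -
  let ?n = "CARD('a) + 1"
  have sub: "words (l - 1) \<subseteq> (words ?n :: (nat \<Rightarrow> 'a) set)"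
    using l_le_q by (intro words_mono) simp
  have b: "bij_betw (\<lambda>(d, y). d + sig y) (Dset l \<times> words (l - 1)) (words ?n :: (nat \<Rightarrow> 'a) set)"
  proof (rule bij_betwI')
    fix p p' :: "(nat \<Rightarrow> 'a) \<times> (nat \<Rightarrow> 'a)" assume p: "p \<in> Dset l \<times> words (l - 1)" and p': "p' \<in> Dset l \<times> words (l - 1)"
    obtain d y where dy: "p = (d, y)" "d \<in> Dset l" "y \<in> words (l - 1)" using p by auto
    obtain d' y' where dy': "p' = (d', y')" "d' \<in> Dset l" "y' \<in> words (l - 1)" using p' by auto
    have pd: "phi l d = 0" "phi l d' = 0" using dy(2) dy'(2) Dset_iff[OF lgt] by auto
    show "((\<lambda>(d, y). d + sig y) p = (\<lambda>(d, y). d + sig y) p') = (p = p')"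
    proof
      assume "(\<lambda>(d, y). d + sig y) p = (\<lambda>(d, y). d + sig y) p'"
      then have e: "d + sig y = d' + sig y'" using dy dy' by simp
      then have "phi l (d + sig y) = phi l (d' + sig y')" by simp
      then have "y = y'" using pd sig_props[OF dy(3)] sig_props[OF dy'(3)] by (simp add: phi_add)
      then show "p = p'" using e dy dy' by simp
    qed simp
  next
    fix p :: "(nat \<Rightarrow> 'a) \<times> (nat \<Rightarrow> 'a)" assume "p \<in> Dset l \<times> words (l - 1)"
    then obtain d y where dy: "p = (d, y)" "d \<in> Dset l" "y \<in> words (l - 1)" by auto
    have "d \<in> words ?n" using dy(2) Dset_iff[OF lgt] by blast
    moreover have "sig y \<in> words ?n" using sig_props[OF dy(3)] sub by blast
    ultimately show "(\<lambda>(d, y). d + sig y) p \<in> words ?n" using dy(1) by (simp add: words_add)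
  next
    fix x assume x: "x \<in> (words ?n :: (nat \<Rightarrow> 'a) set)"
    let ?y = "phi l x"
    have y: "?y \<in> words (l - 1)" by (rule phi_words)
    let ?d = "x - sig ?y"
    have "sig ?y \<in> words ?n" using sig_props[OF y] sub by blast
    then have "?d \<in> words ?n" using x by (rule words_diff[rotated])
    moreover have "phi l ?d = 0" using sig_props[OF y] by (simp add: phi_diff)
    ultimately have "?d \<in> Dset l" using Dset_iff[OF lgt] by blast
    then show "\<exists>p\<in>Dset l \<times> words (l - 1). x = (\<lambda>(d, y). d + sig y) p"
      using y by (intro bexI[of _ "(?d, ?y)"]) auto
  qed
  have "card (words ?n :: (nat \<Rightarrow> 'a) set) = card ((Dset l :: (nat \<Rightarrow> 'a) set) \<times> (words (l - 1) :: (nat \<Rightarrow> 'a) set))"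
    using bij_betw_same_card[OF b] by simp
  then show ?thesis by (simp add: card_cartesian_product words_card)
qed

lemma C_sub_D: "Cset l \<subseteq> (Dset l :: (nat \<Rightarrow> 'a) set)"
proof
  fix c :: "nat \<Rightarrow> 'a" assume "c \<in> Cset l"
  then obtain b where c: "c = cw l b" unfolding Cset_def by auto
  show "c \<in> Dset l" unfolding Dset_def c
    using cw_dot[OF two0 cardL ls lgt] cw_words by blast
qed

lemma cw_inj: "inj_on (cw l) (words (l - 1) :: (nat \<Rightarrow> 'a) set)"
proof
  fix a b :: "nat \<Rightarrow> 'a"
  assume a: "a \<in> words (l - 1)" and b: "b \<in> words (l - 1)" and eq: "cw l a = cw l b"
  let ?c = "a - b"
  have cwc: "cw l ?c = 0" using eq by (simp add: cw_diff)
  have cw': "?c \<in> words (l - 1)" using a b by (rule words_diff)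
  define p where "p = Abs_poly ?c"
  have cp: "coeff p = ?c" unfolding p_def
    by (rule coeff_Abs_poly[of "l - 1"]) (use cw' in \<open>auto simp: words_def\<close>)
  have dp: "degree p < l - 1"
  proof -
    have "degree p \<le> l - 2" by (rule degree_le) (use cw' lgt in \<open>auto simp: cp words_def\<close>)
    then show ?thesis using lgt by simp
  qed
  have roots: "poly p y = 0" for y :: 'a
  proof -
    obtain i where i: "i < CARD('a)" "y = en i"
      using en_bij[OF two0 cardL ls lgt] unfolding bij_betw_def by auto
    have "wt l i * poly p (en i) = 0" using cw_poly(1)[OF two0 cardL ls lgt dp i(1)] cwc cp by simp
    then show ?thesis using wt_nz[OF two0 cardL ls lgt] i by simp
  qed
  have "p = 0"
  proof (rule ccontr)
    assume "p \<noteq> 0"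
    moreover have "degree p < card (UNIV :: 'a set)" using dp l_le_q by simp
    ultimately show False using roots_bound_ex[of p "UNIV :: 'a set"] roots by auto
  qed
  then have "?c = 0" using cp by (auto simp: fun_eq_iff)
  then show "a = b" by simp
qed

lemma card_C: "card (Cset l :: (nat \<Rightarrow> 'a) set) = CARD('a) ^ (l - 1)"
  unfolding Cset_def using card_image[OF cw_inj] words_card by simp

end


lemma cw_add: "cw l (a + b) = cw l a + (cw l b :: nat \<Rightarrow> 'a::{finite,field})"
  unfolding cw_def by (auto simp: fun_eq_iff distrib_left distrib_right sum.distrib)

lemma cw_zero: "cw l 0 = (0 :: nat \<Rightarrow> 'a::{finite,field})"
  unfolding cw_def by (auto simp: fun_eq_iff)

lemma cw_smult: "cw l (\<lambda>j. t * a j) = (\<lambda>i. t * (cw l a i :: 'a::{finite,field}))"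
  unfolding cw_def by (auto simp: fun_eq_iff sum_distrib_left mult_ac)

lemma words_smult: "(a :: nat \<Rightarrow> 'a::mult_zero) \<in> words n \<Longrightarrow> (\<lambda>j. t * a j) \<in> words n"
  unfolding words_def by auto

lemma dotp_add2: "dotp n b (x + y) = dotp n b x + dotp n b y"
  unfolding dotp_def by (simp add: distrib_left sum.distrib)

lemma dotp_smult2: "dotp n b (\<lambda>i. t * y i) = t * dotp n b y"
  unfolding dotp_def by (simp add: sum_distrib_left mult_ac)

definition coset :: "nat \<Rightarrow> (nat \<Rightarrow> 'a::{finite,field}) \<Rightarrow> (nat \<Rightarrow> 'a) set" where
  "coset l x = (\<lambda>c. x + c) ` Cset l"

definition cosets :: "nat \<Rightarrow> (nat \<Rightarrow> 'a::{finite,field}) set set" where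
  "cosets l = coset l ` Dset l"

lemma C_add: "c \<in> Cset l \<Longrightarrow> c' \<in> Cset l \<Longrightarrow> c + c' \<in> Cset l"
  unfolding Cset_def by (auto simp: cw_add[symmetric] intro!: imageI words_add)

lemma C_diff: "c \<in> Cset l \<Longrightarrow> c' \<in> Cset l \<Longrightarrow> c - c' \<in> Cset l"
  unfolding Cset_def by (auto simp: cw_diff[symmetric] intro!: imageI words_diff)

lemma C_zero: "0 \<in> Cset l"
  unfolding Cset_def using cw_zero words_zero by (metis image_eqI)

lemma coset_mem: "y \<in> coset l x \<longleftrightarrow> y - x \<in> Cset l"
  unfolding coset_def by (auto intro: image_eqI[where x="y - x"])

lemma coset_self: "x \<in> coset l x"
  using C_zero by (simp add: coset_mem)

lemma coset_eq:
  assumes "y \<in> coset l x" shows "coset l y = coset l x"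
proof -
  have yx: "y - x \<in> Cset l" using assms coset_mem by blast
  have "z - y \<in> Cset l \<longleftrightarrow> z - x \<in> Cset l" for z
  proof
    assume "z - y \<in> Cset l"
    then have "(z - y) + (y - x) \<in> Cset l" using yx by (rule C_add)
    then show "z - x \<in> Cset l" by simp
  next
    assume "z - x \<in> Cset l"
    then have "(z - x) - (y - x) \<in> Cset l" using yx by (rule C_diff)
    then show "z - y \<in> Cset l" by simp
  qed
  then show ?thesis by (auto simp: coset_mem)
qed

lemma coset_card: "card (coset l (x :: nat \<Rightarrow> 'a::{finite,field})) = card (Cset l :: (nat \<Rightarrow> 'a::{finite,field}) set)"
  unfolding coset_def by (rule card_image) (auto simp: inj_on_def)

lemma coset_finite: "finite (coset l (x :: nat \<Rightarrow> 'a::{finite,field}))"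
proof -
  have "finite (Cset l :: (nat \<Rightarrow> 'a) set)" unfolding Cset_def by (intro finite_imageI words_finite)
  then show ?thesis unfolding coset_def by simp
qed

lemma arith_l3:
  fixes l :: nat assumes "l > 2"
  shows "l^2 + 1 = (l^2 - 2*l + 3) + (l - 1) + (l - 1)"
proof -
  obtain m where m: "l = m + 3" using assms by (intro that[of "l - 3"]) simp
  have sq: "l^2 = (m*m + 4*m + 3) + 2*l" unfolding m by (simp add: power2_eq_square algebra_simps)
  have a: "l^2 - 2*l + 3 = m*m + 4*m + 6" unfolding sq by simp
  show ?thesis unfolding a unfolding sq unfolding m by simp
qed

lemma cancel_aux:
  fixes P c d N t :: nat
  assumes "P * c = d" "d * P = N" "N = t * P * P" "P \<noteq> 0"
  shows "c = t"
proof -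
  have "c * (P * P) = t * (P * P)" using assms(1-3) by (simp add: algebra_simps)
  moreover have "P * P \<noteq> 0" using assms(4) by simp
  ultimately show ?thesis by simp
qed

context
  fixes l s :: nat
  assumes two0: "(2::'a::{finite,field}) = 0"
    and cardL: "CARD('a) = l ^ 2" and ls: "l = 2 ^ s" and lgt: "l > 2"
begin

lemma D_add: "x \<in> Dset l \<Longrightarrow> y \<in> Dset l \<Longrightarrow> x + y \<in> (Dset l :: (nat \<Rightarrow> 'a) set)"
proof -
  assume x: "x \<in> Dset l" and y: "y \<in> Dset l"
  have "x \<in> words (CARD('a) + 1) \<and> phi l x = 0" using x by (rule Dset_iff[OF lgt, THEN iffD1])
  moreover have "y \<in> words (CARD('a) + 1) \<and> phi l y = 0" using y by (rule Dset_iff[OF lgt, THEN iffD1])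
  ultimately have "x + y \<in> words (CARD('a) + 1) \<and> phi l (x + y) = 0"
    by (simp add: phi_add words_add)
  then show ?thesis by (rule Dset_iff[OF lgt, THEN iffD2])
qed

lemma D_diff: "x \<in> Dset l \<Longrightarrow> y \<in> Dset l \<Longrightarrow> x - y \<in> (Dset l :: (nat \<Rightarrow> 'a) set)"
proof -
  assume x: "x \<in> Dset l" and y: "y \<in> Dset l"
  have "x \<in> words (CARD('a) + 1) \<and> phi l x = 0" using x by (rule Dset_iff[OF lgt, THEN iffD1])
  moreover have "y \<in> words (CARD('a) + 1) \<and> phi l y = 0" using y by (rule Dset_iff[OF lgt, THEN iffD1])
  ultimately have "x - y \<in> words (CARD('a) + 1) \<and> phi l (x - y) = 0"
    by (simp add: phi_diff words_diff)
  then show ?thesis by (rule Dset_iff[OF lgt, THEN iffD2])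
qed

lemma coset_sub_D: "x \<in> Dset l \<Longrightarrow> coset l x \<subseteq> (Dset l :: (nat \<Rightarrow> 'a) set)"
proof
  fix y assume x: "x \<in> Dset l" and "y \<in> coset l x"
  then obtain c where c: "c \<in> Cset l" "y = x + c" unfolding coset_def by auto
  have "c \<in> Dset l" using c(1) C_sub_D[OF two0 cardL ls lgt] by (rule subsetD[rotated])
  then show "y \<in> Dset l" unfolding c(2) using x by (intro D_add)
qed

lemma D_words: "Dset l \<subseteq> (words (CARD('a) + 1) :: (nat \<Rightarrow> 'a) set)"
proof
  fix x :: "nat \<Rightarrow> 'a" assume "x \<in> Dset l"
  then have "x \<in> words (CARD('a) + 1) \<and> phi l x = 0" by (rule Dset_iff[OF lgt, THEN iffD1])
  then show "x \<in> words (CARD('a) + 1)" ..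
qed

lemma D_finite: "finite (Dset l :: (nat \<Rightarrow> 'a) set)"
  by (rule finite_subset[OF D_words words_finite])

lemma Union_cosets: "\<Union> (cosets l) = (Dset l :: (nat \<Rightarrow> 'a) set)"
proof (intro equalityI subsetI)
  fix y :: "nat \<Rightarrow> 'a" assume "y \<in> \<Union> (cosets l)"
  then obtain x where "x \<in> Dset l" "y \<in> coset l x" unfolding cosets_def by auto
  then show "y \<in> Dset l" using coset_sub_D by blast
next
  fix y :: "nat \<Rightarrow> 'a" assume "y \<in> Dset l"
  then have "coset l y \<in> cosets l" unfolding cosets_def by simp
  then show "y \<in> \<Union> (cosets l)" using coset_self[of y l] by blast
qed

lemma card_cosets: "card (cosets l :: (nat \<Rightarrow> 'a) set set) = CARD('a) ^ (l ^ 2 - 2 * l + 3)"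
proof -
  have "card (Cset l :: (nat \<Rightarrow> 'a) set) * card (cosets l :: (nat \<Rightarrow> 'a) set set) = card (\<Union> (cosets l :: (nat \<Rightarrow> 'a) set set))"
  proof (rule card_partition)
    show "finite (cosets l :: (nat \<Rightarrow> 'a) set set)" unfolding cosets_def using D_finite by simp
    show "finite (\<Union> (cosets l :: (nat \<Rightarrow> 'a) set set))" using Union_cosets D_finite by simp
    show "card K = card (Cset l :: (nat \<Rightarrow> 'a) set)" if "K \<in> (cosets l :: (nat \<Rightarrow> 'a) set set)" for K
      using that unfolding cosets_def by (auto simp: coset_card)
    show "K1 \<inter> K2 = {}" if K1: "K1 \<in> (cosets l :: (nat \<Rightarrow> 'a) set set)" and K2: "K2 \<in> cosets l" and ne: "K1 \<noteq> K2" for K1 K2 :: "(nat \<Rightarrow> 'a) set"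
    proof (rule ccontr)
      assume "K1 \<inter> K2 \<noteq> {}"
      then obtain y where y: "y \<in> K1" "y \<in> K2" by auto
      obtain x1 where x1: "K1 = coset l x1" using K1 unfolding cosets_def by auto
      obtain x2 where x2: "K2 = coset l x2" using K2 unfolding cosets_def by auto
      have "K1 = coset l y" using y(1) coset_eq[of y l x1] x1 by simp
      moreover have "K2 = coset l y" using y(2) coset_eq[of y l x2] x2 by simp
      ultimately show False using ne by simp
    qed
  qed
  then have e: "CARD('a) ^ (l - 1) * card (cosets l :: (nat \<Rightarrow> 'a) set set) = card (Dset l :: (nat \<Rightarrow> 'a) set)"
    using card_C[OF two0 cardL ls lgt] Union_cosets by simp
  have "CARD('a) ^ (CARD('a) + 1) = CARD('a) ^ (l ^ 2 - 2 * l + 3) * CARD('a) ^ (l - 1) * CARD('a) ^ (l - 1)"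
  proof -
    have "CARD('a) + 1 = (l ^ 2 - 2 * l + 3) + (l - 1) + (l - 1)"
      unfolding cardL by (rule arith_l3[OF lgt])
    then show ?thesis by (metis power_add)
  qed
  note N = this
  show ?thesis
    by (rule cancel_aux[OF e card_D[OF two0 cardL ls lgt] N]) simp
qed

end


definition Qset :: "nat \<Rightarrow> ((nat \<Rightarrow> 'a::{finite,field}) \<Rightarrow> complex) set" where
  "Qset l = {v. (\<forall>x. x \<notin> Dset l \<longrightarrow> v x = 0) \<and> (\<forall>x. \<forall>c\<in>Cset l. v (x + c) = v x)}"

definition ind :: "'b set \<Rightarrow> 'b \<Rightarrow> complex" where
  "ind K = (\<lambda>y. if y \<in> K then 1 else 0)"

lemma vs_cscale: "vector_space (cscale :: complex \<Rightarrow> ('b \<Rightarrow> complex) \<Rightarrow> ('b \<Rightarrow> complex))"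
  unfolding vector_space_def cscale_def by (auto simp: fun_eq_iff algebra_simps)

interpretation cs: vector_space "cscale :: complex \<Rightarrow> ('b \<Rightarrow> complex) \<Rightarrow> ('b \<Rightarrow> complex)"
  by (rule vs_cscale)

lemma sum_fun_apply: "(sum f A) y = (\<Sum>a\<in>A. f a y :: complex)"
  by (induction A rule: infinite_finite_induct) auto

lemma ind_inj: "inj ind"
proof
  fix K1 K2 :: "'b set" assume "ind K1 = ind K2"
  then have "(if y \<in> K1 then 1 else 0 :: complex) = (if y \<in> K2 then 1 else 0)" for y
    unfolding ind_def by metis
  then show "K1 = K2" by (metis one_neq_zero subsetI subset_antisym)
qed

context
  fixes l s :: nat
  assumes two0: "(2::'a::{finite,field}) = 0"
    and cardL: "CARD('a) = l ^ 2" and ls: "l = 2 ^ s" and lgt: "l > 2"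
begin

lemma cosets_D: "K \<in> cosets l \<Longrightarrow> K \<subseteq> (Dset l :: (nat \<Rightarrow> 'a) set)"
proof -
  assume "K \<in> cosets l"
  then obtain x where "x \<in> Dset l" "K = coset l x" unfolding cosets_def by auto
  then show ?thesis using coset_sub_D[OF two0 cardL ls lgt] by simp
qed

lemma cosets_unique:
  assumes "K \<in> cosets l" "y \<in> K"
  shows "K = coset l (y :: nat \<Rightarrow> 'a)"
proof -
  obtain x where "K = coset l x" using assms(1) unfolding cosets_def by auto
  then show ?thesis using coset_eq[of y l x] assms(2) by simp
qed

lemma Q_subspace: "cs.subspace (Qset l :: ((nat \<Rightarrow> 'a) \<Rightarrow> complex) set)"
  unfolding cs.subspace_def Qset_def cscale_def by auto

lemma Q_Vn: "Qset l \<subseteq> (Vn (CARD('a) + 1) :: ((nat \<Rightarrow> 'a) \<Rightarrow> complex) set)"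
proof
  fix v :: "(nat \<Rightarrow> 'a) \<Rightarrow> complex" assume v: "v \<in> Qset l"
  have "v x = 0" if "x \<notin> words (CARD('a) + 1)" for x
  proof -
    have "x \<notin> Dset l" using that D_words[OF two0 cardL ls lgt] by blast
    then show ?thesis using v unfolding Qset_def by blast
  qed
  then show "v \<in> Vn (CARD('a) + 1)" unfolding Vn_def by blast
qed

lemma B_sub_Q: "ind ` cosets l \<subseteq> (Qset l :: ((nat \<Rightarrow> 'a) \<Rightarrow> complex) set)"
proof
  fix w assume "w \<in> ind ` (cosets l :: (nat \<Rightarrow> 'a) set set)"
  then obtain x where x: "x \<in> Dset l" and w: "w = ind (coset l x)" unfolding cosets_def by auto
  have "w y = 0" if "y \<notin> Dset l" for y
    using that coset_sub_D[OF two0 cardL ls lgt x] unfolding w ind_def by auto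
  moreover have "w (y + c) = w y" if "c \<in> Cset l" for y c
  proof -
    have "y + c - x \<in> Cset l \<longleftrightarrow> y - x \<in> Cset l"
    proof
      assume "y + c - x \<in> Cset l"
      then have "(y + c - x) - c \<in> Cset l" using that by (rule C_diff)
      then show "y - x \<in> Cset l" by (simp add: algebra_simps)
    next
      assume "y - x \<in> Cset l"
      then have "(y - x) + c \<in> Cset l" using that by (rule C_add)
      then show "y + c - x \<in> Cset l" by (simp add: algebra_simps)
    qed
    then show ?thesis unfolding w ind_def coset_mem by simp
  qed
  ultimately show "w \<in> Qset l" unfolding Qset_def by blast
qed

lemma B_indep: "cs.independent (ind ` (cosets l :: (nat \<Rightarrow> 'a) set set))"
proof
  assume "cs.dependent (ind ` (cosets l :: (nat \<Rightarrow> 'a) set set))"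
  then have "\<exists>t u. finite t \<and> t \<subseteq> ind ` (cosets l :: (nat \<Rightarrow> 'a) set set) \<and> (\<Sum>w\<in>t. cscale (u w) w) = 0 \<and> (\<exists>v\<in>t. u v \<noteq> 0)"
    by (simp only: cs.dependent_explicit)
  then obtain t where "\<exists>u. finite t \<and> t \<subseteq> ind ` (cosets l :: (nat \<Rightarrow> 'a) set set) \<and> (\<Sum>w\<in>t. cscale (u w) w) = 0 \<and> (\<exists>v\<in>t. u v \<noteq> 0)"
    by (rule exE)
  then obtain u where H: "finite t \<and> t \<subseteq> ind ` (cosets l :: (nat \<Rightarrow> 'a) set set) \<and> (\<Sum>w\<in>t. cscale (u w) w) = 0 \<and> (\<exists>v\<in>t. u v \<noteq> 0)"
    by (rule exE)
  have t: "finite t" "t \<subseteq> ind ` cosets l" using H by simp_all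
  have sum0: "(\<Sum>w\<in>t. cscale (u w) w) = 0" using H by simp
  have ex: "\<exists>v\<in>t. u v \<noteq> 0" using H by simp
  from ex obtain v where v: "v \<in> t" "u v \<noteq> 0" by (elim bexE)
  obtain K0 where K0: "K0 \<in> cosets l" "v = ind K0" using t(2) v(1) by auto
  obtain x0 where x0: "x0 \<in> Dset l" "K0 = coset l x0" using K0(1) unfolding cosets_def by auto
  have x0K: "x0 \<in> K0" using x0(2) coset_self by simp
  have "0 = (\<Sum>w\<in>t. cscale (u w) w) x0" using sum0 by simp
  also have "\<dots> = (\<Sum>w\<in>t. u w * w x0)" unfolding sum_fun_apply cscale_def ..
  also have "\<dots> = u v * v x0 + (\<Sum>w\<in>t - {v}. u w * w x0)" by (rule sum.remove[OF t(1) v(1)])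
  also have "(\<Sum>w\<in>t - {v}. u w * w x0) = 0"
  proof (rule sum.neutral, rule ballI)
    fix w assume w: "w \<in> t - {v}"
    then obtain K where K: "K \<in> cosets l" "w = ind K" using t(2) by auto
    have "x0 \<notin> K"
    proof
      assume "x0 \<in> K"
      then have "K = K0" using cosets_unique[OF K(1)] x0(2) by simp
      then show False using w K K0 by simp
    qed
    then show "u w * w x0 = 0" unfolding K(2) ind_def by simp
  qed
  also have "v x0 = 1" using x0K unfolding K0(2) ind_def by simp
  finally show False using v(2) by simp
qed

lemma Q_span: "Qset l \<subseteq> cs.span (ind ` (cosets l :: (nat \<Rightarrow> 'a) set set))"
proof
  fix v :: "(nat \<Rightarrow> 'a) \<Rightarrow> complex" assume vQ: "v \<in> Qset l"
  define rep where "rep K = (SOME y. y \<in> K)" for K :: "(nat \<Rightarrow> 'a) set"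
  have fin: "finite (cosets l :: (nat \<Rightarrow> 'a) set set)" unfolding cosets_def using D_finite[OF two0 cardL ls lgt] by simp
  have eq: "v = (\<Sum>K\<in>cosets l. cscale (v (rep K)) (ind K))"
  proof
    fix y :: "nat \<Rightarrow> 'a"
    have "(\<Sum>K\<in>cosets l. cscale (v (rep K)) (ind K)) y = (\<Sum>K\<in>cosets l. v (rep K) * ind K y)"
      unfolding sum_fun_apply cscale_def ..
    also have "\<dots> = v y"
    proof (cases "y \<in> Dset l")
      case True
      let ?Ky = "coset l y"
      have Ky: "?Ky \<in> cosets l" using True unfolding cosets_def by simp
      have "(\<Sum>K\<in>cosets l. v (rep K) * ind K y) = v (rep ?Ky) * ind ?Ky y + (\<Sum>K\<in>cosets l - {?Ky}. v (rep K) * ind K y)"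
        by (rule sum.remove[OF fin Ky])
      also have "(\<Sum>K\<in>cosets l - {?Ky}. v (rep K) * ind K y) = 0"
      proof (rule sum.neutral, rule ballI)
        fix K assume K: "K \<in> cosets l - {?Ky}"
        have "y \<notin> K" using cosets_unique[of K y] K by auto
        then show "v (rep K) * ind K y = 0" unfolding ind_def by simp
      qed
      also have "ind ?Ky y = 1" unfolding ind_def using coset_self by simp
      also have "rep ?Ky \<in> ?Ky" unfolding rep_def using coset_self by (metis someI_ex)
      then have "rep ?Ky - y \<in> Cset l" by (simp add: coset_mem)
      then have "v (y + (rep ?Ky - y)) = v y" using vQ unfolding Qset_def by blast
      then have "v (rep ?Ky) = v y" by simp
      finally show ?thesis by simp
    next
      case False
      have "ind K y = 0" if "K \<in> cosets l" for K
        using cosets_D[OF that] False unfolding ind_def by auto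
      moreover have "v y = 0" using vQ False unfolding Qset_def by blast
      ultimately show ?thesis by simp
    qed
    finally show "v y = (\<Sum>K\<in>cosets l. cscale (v (rep K)) (ind K)) y" by simp
  qed
  have "(\<Sum>K\<in>cosets l. cscale (v (rep K)) (ind K)) \<in> cs.span (ind ` cosets l)"
    by (intro cs.span_sum cs.span_scale cs.span_base imageI)
  then show "v \<in> cs.span (ind ` cosets l)" using eq by simp
qed

lemma Q_dim: "cs.dim (Qset l :: ((nat \<Rightarrow> 'a) \<Rightarrow> complex) set) = CARD('a) ^ (l ^ 2 - 2 * l + 3)"
proof (rule cs.dim_unique[OF B_sub_Q Q_span B_indep])
  show "card (ind ` (cosets l :: (nat \<Rightarrow> 'a) set set)) = CARD('a) ^ (l ^ 2 - 2 * l + 3)"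
  proof -
    have "card (ind ` (cosets l :: (nat \<Rightarrow> 'a) set set)) = card (cosets l :: (nat \<Rightarrow> 'a) set set)"
      by (rule card_image) (rule inj_on_subset[OF ind_inj], simp)
    then show ?thesis using card_cosets[OF two0 cardL ls lgt] by simp
  qed
qed

end


context
  fixes l s :: nat
  assumes two0: "(2::'a::{finite,field}) = 0"
    and cardL: "CARD('a) = l ^ 2" and ls: "l = 2 ^ s" and lgt: "l > 2"
begin

lemma cardE: "CARD('a) = 2 ^ (2 * s)"
  using cardL ls by (simp add: power_mult[symmetric] mult.commute)
lemma epos: "2 * s > 0"
  using ls lgt by (cases s) auto

lemma om_add: "omega_pow (ftrace ((x::'a) + y)) = omega_pow (ftrace x) * omega_pow (ftrace y)"
  using chi_add[OF two0 cardE epos, of x y] unfolding chi_def[OF two0 cardE epos] .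

lemma om_0: "omega_pow (ftrace (0::'a)) = 1"
  using chi_0[OF two0 cardE epos] unfolding chi_def[OF two0 cardE epos] .

lemma om_nontriv: "\<exists>g::'a. omega_pow (ftrace g) \<noteq> 1"
  using chi_nontriv[OF two0 cardE epos] unfolding chi_def[OF two0 cardE epos] .

lemma om_prod: "(\<Prod>i\<in>A. omega_pow (ftrace (f i :: 'a))) = omega_pow (ftrace (\<Sum>i\<in>A. f i))"
  using chi_sum[OF two0 cardE epos, of f A] unfolding chi_def[OF two0 cardE epos] .

lemma min_distance: "has_min_distance (CARD('a) + 1) (Qset l :: ((nat \<Rightarrow> 'a) \<Rightarrow> complex) set) l"
  unfolding has_min_distance_def
proof (intro ballI impI allI)
  let ?n = "CARD('a) + 1"
  fix u v :: "(nat \<Rightarrow> 'a) \<Rightarrow> complex" and c :: nat and a b :: "nat \<Rightarrow> 'a"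
  assume uQ: "u \<in> Qset l" and vQ: "v \<in> Qset l" and uv: "qinner ?n u v = 0"
    and abw: "a \<in> words ?n \<and> b \<in> words ?n \<and> err_weight ?n a b \<le> l - 1"
  have aw: "a \<in> words ?n" and bw: "b \<in> words ?n" using abw by auto
  have wa: "card {i. i < ?n \<and> a i \<noteq> 0} \<le> l - 1"
  proof -
    have sub: "{i. i < ?n \<and> a i \<noteq> 0} \<subseteq> {i. i < ?n \<and> (a i \<noteq> 0 \<or> b i \<noteq> 0)}" by blast
    have "card {i. i < ?n \<and> a i \<noteq> 0} \<le> card {i. i < ?n \<and> (a i \<noteq> 0 \<or> b i \<noteq> 0)}"
      by (rule card_mono[OF _ sub]) simp
    also have "\<dots> \<le> l - 1" using abw unfolding err_weight_def by simp
    finally show ?thesis .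
  qed
  have wb: "card {i. i < ?n \<and> b i \<noteq> 0} \<le> l - 1"
  proof -
    have sub: "{i. i < ?n \<and> b i \<noteq> 0} \<subseteq> {i. i < ?n \<and> (a i \<noteq> 0 \<or> b i \<noteq> 0)}" by blast
    have "card {i. i < ?n \<and> b i \<noteq> 0} \<le> card {i. i < ?n \<and> (a i \<noteq> 0 \<or> b i \<noteq> 0)}"
      by (rule card_mono[OF _ sub]) simp
    also have "\<dots> \<le> l - 1" using abw unfolding err_weight_def by simp
    finally show ?thesis .
  qed
  have uD: "u x = 0" if "x \<notin> Dset l" for x using uQ that unfolding Qset_def by blast
  have vD: "v x = 0" if "x \<notin> Dset l" for x using vQ that unfolding Qset_def by blast
  have uC: "u (x + c) = u x" if "c \<in> Cset l" for x c using uQ that unfolding Qset_def by blast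
  have vC: "v (x + c) = v x" if "c \<in> Cset l" for x c using vQ that unfolding Qset_def by blast
  let ?E = "err_apply ?n c a b v"
  have qE: "qinner ?n u ?E = (\<Sum>x\<in>words ?n. cnj (u x) * (omega_nat TYPE('a) c *
      (\<Prod>i<?n. omega_pow (ftrace (b i * (x i - a i)))) * v (x - a)))"
    unfolding qinner_def err_apply_def by (intro sum.cong refl) simp
  show "qinner ?n u ?E = 0"
  proof (cases "a \<in> Dset l")
    case False
    have h: "cnj (u x) * (omega_nat TYPE('a) c * (\<Prod>i<?n. omega_pow (ftrace (b i * (x i - a i)))) * v (x - a)) = 0" for x
    proof (cases "x \<in> Dset l")
      case True
      have "x - a \<notin> Dset l"
      proof
        assume xa: "x - a \<in> Dset l"
        have "x - (x - a) \<in> Dset l" by (rule D_diff[OF two0 cardL ls lgt True xa])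
        then show False using False by simp
      qed
      then show ?thesis using vD by simp
    next
      case False
      then show ?thesis using uD by simp
    qed
    show ?thesis unfolding qE by (rule sum.neutral) (use h in blast)
  next
    case True
    have a0: "a = 0" by (rule min_dist[OF two0 cardL ls lgt True wa])
    define chiB where "chiB x = omega_pow (ftrace (dotp ?n b x))" for x
    have prodB: "(\<Prod>i<?n. omega_pow (ftrace (b i * (x i - a i)))) = chiB x" for x
    proof -
      have "(\<Prod>i<?n. omega_pow (ftrace (b i * (x i - a i)))) = (\<Prod>i<?n. omega_pow (ftrace (b i * x i)))"
        by (intro prod.cong refl) (simp add: a0)
      also have "\<dots> = chiB x" unfolding chiB_def dotp_def by (rule om_prod)
      finally show ?thesis .
    qed
    define S where "S = (\<Sum>x\<in>words ?n. cnj (u x) * v x * chiB x)"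
    have "qinner ?n u ?E = (\<Sum>x\<in>words ?n. cnj (u x) * (omega_nat TYPE('a) c * chiB x * v x))"
      unfolding qE by (intro sum.cong refl) (simp only: prodB, simp only: a0 diff_zero)
    also have "\<dots> = omega_nat TYPE('a) c * S"
      unfolding S_def by (simp add: sum_distrib_left mult_ac)
    finally have qS: "qinner ?n u ?E = omega_nat TYPE('a) c * S" .
    have "S = 0"
    proof (cases "b \<in> Dset l")
      case True
      have "b = 0" by (rule min_dist[OF two0 cardL ls lgt True wb])
      then have "chiB x = 1" for x unfolding chiB_def dotp_def using om_0 by simp
      then show "S = 0" using uv unfolding S_def qinner_def by simp
    next
      case False
      then obtain a' where a': "a' \<in> words (l - 1)" and bn: "dotp ?n b (cw l a') \<noteq> 0"
        using bw unfolding Dset_def by blast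
      obtain g :: 'a where g: "omega_pow (ftrace g) \<noteq> 1" using om_nontriv by blast
      define t where "t = g / dotp ?n b (cw l a')"
      define c1 where "c1 = cw l (\<lambda>j. t * a' j)"
      have c1C: "c1 \<in> Cset l" unfolding c1_def Cset_def using words_smult[OF a'] by blast
      have c1w: "c1 \<in> words ?n" unfolding c1_def by (rule cw_words)
      have dc1: "dotp ?n b c1 = g" unfolding c1_def cw_smult dotp_smult2 t_def using bn by simp
      have bij: "bij_betw (\<lambda>x. x + c1) (words ?n) (words ?n)"
      proof (rule bij_betwI[where g="\<lambda>x. x - c1"])
        show "(\<lambda>x. x + c1) \<in> words ?n \<rightarrow> words ?n" using c1w by (auto intro: words_add)
        show "(\<lambda>x. x - c1) \<in> words ?n \<rightarrow> words ?n" using c1w by (auto intro: words_diff)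
      qed auto
      have "S = (\<Sum>x\<in>words ?n. cnj (u (x + c1)) * v (x + c1) * chiB (x + c1))"
        unfolding S_def using sum.reindex_bij_betw[OF bij, of "\<lambda>x. cnj (u x) * v x * chiB x"] by simp
      also have "\<dots> = (\<Sum>x\<in>words ?n. omega_pow (ftrace g) * (cnj (u x) * v x * chiB x))"
      proof (intro sum.cong refl)
        fix x
        have "chiB (x + c1) = chiB x * omega_pow (ftrace g)"
          unfolding chiB_def dotp_add2 dc1 om_add ..
        then show "cnj (u (x + c1)) * v (x + c1) * chiB (x + c1) = omega_pow (ftrace g) * (cnj (u x) * v x * chiB x)"
          using uC[OF c1C] vC[OF c1C] by simp
      qed
      also have "\<dots> = omega_pow (ftrace g) * S" unfolding S_def by (simp add: sum_distrib_left)
      finally have "(1 - omega_pow (ftrace g)) * S = 0" by (simp add: algebra_simps)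
      then show "S = 0" using g by simp
    qed
    then show ?thesis using qS by simp
  qed
qed

end


lemma arith_final: "(l::nat) > 2 \<Longrightarrow> 2 * l + (l ^ 2 - 2 * l + 3) = l ^ 2 + 1 + 2"
proof -
  assume "l > 2"
  then have "l ^ 2 - 2 * l + 3 + (2 * l - 4) = l ^ 2 - 1" by (rule arith_l(2))
  moreover have "l ^ 2 \<ge> 1" using \<open>l > 2\<close> by simp
  ultimately show ?thesis using \<open>l > 2\<close> by linarith
qed

theorem mainTheorem5:
  fixes s l :: nat
  assumes "l = 2 ^ s" and "l > 2"
    and "CARD('a::{finite,field}) = l ^ 2"
  shows "\<exists>Q :: ((nat \<Rightarrow> 'a) \<Rightarrow> complex) set.
           is_quantum_MDS_code (l ^ 2 + 1) (l ^ 2 - 2 * l + 3) l Q"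
proof -
  note ls = assms(1) and lgt = assms(2) and cardL = assms(3)
  have ev: "even CARD('a)" unfolding cardL using ls lgt by (cases s) auto
  have two0: "(2::'a) = 0" by (rule two_eq_zero_ff[OF ev])
  have n: "l ^ 2 + 1 = CARD('a) + 1" using cardL by simp
  show ?thesis
    unfolding is_quantum_MDS_code_def is_quantum_code_def n
  proof (intro exI[of _ "Qset l"] conjI)
    show "Qset l \<subseteq> (Vn (CARD('a) + 1) :: ((nat \<Rightarrow> 'a) \<Rightarrow> complex) set)"
      by (rule Q_Vn[OF two0 cardL ls lgt])
    show "module.subspace cscale (Qset l :: ((nat \<Rightarrow> 'a) \<Rightarrow> complex) set)"
      by (rule Q_subspace[OF two0 cardL ls lgt])
    show "vector_space.dim cscale (Qset l :: ((nat \<Rightarrow> 'a) \<Rightarrow> complex) set) = CARD('a) ^ (l ^ 2 - 2 * l + 3)"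
      by (rule Q_dim[OF two0 cardL ls lgt])
    show "has_min_distance (CARD('a) + 1) (Qset l :: ((nat \<Rightarrow> 'a) \<Rightarrow> complex) set) l"
      by (rule min_distance[OF two0 cardL ls lgt])
    show "2 * l + (l ^ 2 - 2 * l + 3) = CARD('a) + 1 + 2"
      using arith_final[OF lgt] cardL by simp
  qed
qed

end
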